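(* Let $R$ be a commutative ring with identity, ${}_RM$ a finitely generated semisimple $R$-module, and $\varphi:M\to M$ an indecomposable nilpotent element of the ring $\mathrm{Hom}_R(M,M)$, with index of nilpotency $n$ ($\varphi^n=0\ne\varphi^{n-1}$). For $\psi\in\mathrm{Hom}_R(M,M)$ the following are equivalent: (1) $\psi\circ\varphi=\varphi\circ\psi$; (2) there exist $a_1,\dots,a_n\in R$ such that $a_1u+a_2\varphi(u)+\cdots+a_n\varphi^{n-1}(u)=\psi(u)$ for all $u\in M$, i.e. $\psi$ is a polynomial of $\varphi$.
   Context: A nilpotent element $s$ of a ring $S$ is decomposable if $es=se$ for some idempotent $e\in S$ with $0\ne e\ne1$, and indecomposable otherwise. *)

theory Defs
  imports Complex_Main
begin

text \<open>Endomorphisms (elements of Hom_R(M,M)) are the maps f with module_hom scale scale f;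
  the ring structure is pointwise addition and composition, zero is the zero map,
  identity is id.\<close>

definition fin_gen_module :: "('a::comm_ring_1 \<Rightarrow> 'b::ab_group_add \<Rightarrow> 'b) \<Rightarrow> bool" where
  "fin_gen_module scale \<longleftrightarrow> (\<exists>S. finite S \<and> module.span scale S = UNIV)"

definition semisimple_module :: "('a::comm_ring_1 \<Rightarrow> 'b::ab_group_add \<Rightarrow> 'b) \<Rightarrow> bool" where
  "semisimple_module scale \<longleftrightarrow>
     (\<forall>N. module.subspace scale N \<longrightarrow>
        (\<exists>N'. module.subspace scale N' \<and> N \<inter> N' = {0} \<and>
              {x + y | x y. x \<in> N \<and> y \<in> N'} = UNIV))"

definition nilpotent_endo :: "('a::comm_ring_1 \<Rightarrow> 'b::ab_group_add \<Rightarrow> 'b) \<Rightarrow> ('b \<Rightarrow> 'b) \<Rightarrow> bool" where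
  "nilpotent_endo scale s \<longleftrightarrow> module_hom scale scale s \<and> (\<exists>n. s ^^ n = (\<lambda>_. 0))"

definition decomposable_nilpotent :: "('a::comm_ring_1 \<Rightarrow> 'b::ab_group_add \<Rightarrow> 'b) \<Rightarrow> ('b \<Rightarrow> 'b) \<Rightarrow> bool" where
  "decomposable_nilpotent scale s \<longleftrightarrow> nilpotent_endo scale s \<and>
     (\<exists>e. module_hom scale scale e \<and> e \<circ> e = e \<and> e \<noteq> (\<lambda>_. 0) \<and> e \<noteq> id \<and> e \<circ> s = s \<circ> e)"

definition indecomposable_nilpotent :: "('a::comm_ring_1 \<Rightarrow> 'b::ab_group_add \<Rightarrow> 'b) \<Rightarrow> ('b \<Rightarrow> 'b) \<Rightarrow> bool" where
  "indecomposable_nilpotent scale s \<longleftrightarrow> nilpotent_endo scale s \<and> \<not> decomposable_nilpotent scale s"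

end

theory Submission
  imports Defs
begin

locale nilp = module scale
  for scale :: "'a::comm_ring_1 \<Rightarrow> 'b::ab_group_add \<Rightarrow> 'b" (infixr \<open>*s\<close> 75) +
  fixes \<phi> :: "'b \<Rightarrow> 'b" and n :: nat
  assumes hom: "module_hom scale scale \<phi>"
    and nil: "\<phi> ^^ n = (\<lambda>_. 0)" and nn: "\<phi> ^^ (n - 1) \<noteq> (\<lambda>_. 0)"
    and semi: "semisimple_module scale"
    and indec: "\<And>e. module_hom scale scale e \<Longrightarrow> e \<circ> e = e \<Longrightarrow> e \<circ> \<phi> = \<phi> \<circ> e
       \<Longrightarrow> e \<noteq> (\<lambda>_. 0) \<Longrightarrow> e = id"
begin

lemma powhom: "module_hom scale scale (\<phi> ^^ i)"
proof (induction i)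
  case 0 then show ?case using module_hom_ident by simp
next
  case (Suc i) then show ?case using module_hom_compose[OF Suc hom] by (simp add: o_def)
qed

lemma pow_add: "(\<phi>^^i) (x + y) = (\<phi>^^i) x + (\<phi>^^i) y"
  using module_hom.add[OF powhom] .
lemma pow_scale: "(\<phi>^^i) (r *s x) = r *s (\<phi>^^i) x"
  using module_hom.scale[OF powhom] .
lemma pow_zero[simp]: "(\<phi>^^i) 0 = 0"
  using module_hom.zero[OF powhom] .
lemma pow_sum: "(\<phi>^^i) (sum g S) = (\<Sum>a\<in>S. (\<phi>^^i) (g a))"
  using module_hom.sum[OF powhom] .
lemma pow_diff: "(\<phi>^^i) (x - y) = (\<phi>^^i) x - (\<phi>^^i) y"
  using module_hom.diff[OF powhom] .

lemma pp: "(\<phi>^^i) ((\<phi>^^j) x) = (\<phi>^^(i+j)) x"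
  by (simp add: funpow_add)

lemma big: "i \<ge> n \<Longrightarrow> (\<phi>^^i) x = 0"
proof -
  assume "i \<ge> n"
  then have "(\<phi>^^i) x = (\<phi>^^(i-n)) ((\<phi>^^n) x)" using pp[of "i-n" n x] by simp
  then show ?thesis using nil by simp
qed

lemma npos: "n > 0"
  using nil nn by (cases n) auto

lemma ex_c: "\<exists>c. (\<phi>^^(n-1)) c \<noteq> 0 \<and> (\<forall>b. b *s (\<phi>^^(n-1)) c = 0 \<longrightarrow> b *s c = 0)"
proof -
  obtain v0 where v0: "(\<phi>^^(n-1)) v0 \<noteq> 0" using nn by auto
  define w0 where "w0 = (\<phi>^^(n-1)) v0"
  define S where "S = {a *s v0 | a. a *s w0 = 0}"
  have "subspace S"
  proof (rule subspaceI)
    show "0 \<in> S" unfolding S_def by (rule CollectI, rule exI[of _ 0]) simp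
    fix x y assume "x \<in> S" "y \<in> S"
    then obtain a b where "x = a *s v0" "a *s w0 = 0" "y = b *s v0" "b *s w0 = 0"
      unfolding S_def by auto
    then show "x + y \<in> S" unfolding S_def
      by (intro CollectI exI[of _ "a+b"]) (simp add: scale_left_distrib)
  next
    fix c x assume "x \<in> S"
    then obtain a where "x = a *s v0" "a *s w0 = 0" unfolding S_def by auto
    then show "c *s x \<in> S" unfolding S_def
      by (intro CollectI exI[of _ "c*a"]) (metis scale_scale scale_zero_right)
  qed
  have "\<exists>D. subspace D \<and> S \<inter> D = {0} \<and> {x + y | x y. x \<in> S \<and> y \<in> D} = UNIV"
    using semi[unfolded semisimple_module_def, rule_format, OF \<open>subspace S\<close>] .
  then obtain D where D0: "subspace D \<and> S \<inter> D = {0} \<and> {x + y | x y. x \<in> S \<and> y \<in> D} = UNIV"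
    by (rule exE)
  note D = conjunct1[OF D0] conjunct1[OF conjunct2[OF D0]] conjunct2[OF conjunct2[OF D0]]
  have "v0 \<in> {x + y | x y. x \<in> S \<and> y \<in> D}" using D(3) by simp
  then obtain x d where xd: "v0 = x + d" "x \<in> S" "d \<in> D" by auto
  then obtain a where a: "x = a *s v0" "a *s w0 = 0" unfolding S_def by auto
  have "d = v0 - a *s v0" using xd(1) a(1) by (metis add_diff_cancel_left')
  then have dv: "d = (1 - a) *s v0" by (simp add: scale_left_diff_distrib)
  have dw: "(\<phi>^^(n-1)) d = w0" using a dv
    by (simp add: pow_scale pow_diff w0_def scale_left_diff_distrib)
  show ?thesis
  proof (intro exI conjI allI impI)
    show "(\<phi>^^(n-1)) d \<noteq> 0" using dw v0 w0_def by simp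
    fix b assume "b *s (\<phi>^^(n-1)) d = 0"
    then have bw: "b *s w0 = 0" using dw by simp
    have "b *s d = (b * (1 - a)) *s v0" using dv by simp
    moreover have "(b * (1 - a)) *s w0 = 0" using bw
      by (metis mult.commute scale_scale scale_zero_right)
    ultimately have "b *s d \<in> S" unfolding S_def by blast
    moreover have "b *s d \<in> D" using D(1) xd(3) by (rule subspace_scale)
    ultimately show "b *s d = 0" using D(2) by blast
  qed
qed

end


locale nilp_c = nilp +
  fixes c :: 'b
  assumes cw: "(\<phi>^^(n-1)) c \<noteq> 0"
    and ann: "\<And>b. b *s (\<phi>^^(n-1)) c = 0 \<Longrightarrow> b *s c = 0"
begin

lemma ann_pow: "b *s c = 0 \<Longrightarrow> b *s (\<phi>^^i) c = 0"
  by (metis pow_scale pow_zero)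

definition comb :: "(nat \<Rightarrow> 'a) \<Rightarrow> 'b" where
  "comb a = (\<Sum>i<n. a i *s (\<phi>^^i) c)"

lemma indep: "comb a = 0 \<Longrightarrow> k < n \<Longrightarrow> a k *s c = 0"
proof (induction k rule: less_induct)
  case (less k)
  have "(\<phi>^^(n-1-k)) (comb a) = (\<Sum>i<n. a i *s (\<phi>^^(n-1-k+i)) c)"
    by (simp add: comb_def pow_sum pow_scale pp)
  also have "\<dots> = (\<Sum>i<n. if i = k then a k *s (\<phi>^^(n-1)) c else 0)"
  proof (rule sum.cong[OF refl])
    fix i assume i: "i \<in> {..<n}"
    consider "i < k" | "i = k" | "i > k" by linarith
    then show "a i *s (\<phi>^^(n-1-k+i)) c = (if i = k then a k *s (\<phi>^^(n-1)) c else 0)"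
    proof cases
      case 1
      then have "a i *s c = 0" using less.IH[of i] less.prems by simp
      then show ?thesis using 1 ann_pow by simp
    next
      case 2
      then have "n-1-k+i = n-1" using less.prems by simp
      then show ?thesis using 2 by simp
    next
      case 3
      then have "n-1-k+i \<ge> n" using less.prems by simp
      then show ?thesis using 3 big by simp
    qed
  qed
  also have "\<dots> = a k *s (\<phi>^^(n-1)) c" using less.prems by simp
  finally have "a k *s (\<phi>^^(n-1)) c = 0" using less.prems by simp
  then show ?case by (rule ann)
qed

lemma comb_add: "comb a + comb b = comb (\<lambda>i. a i + b i)"
  by (simp add: comb_def scale_left_distrib sum.distrib)

lemma comb_diff: "comb a - comb b = comb (\<lambda>i. a i - b i)"
  by (simp add: comb_def scale_left_diff_distrib sum_subtractf)

lemma comb_scale: "r *s comb a = comb (\<lambda>i. r * a i)"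
  by (simp add: comb_def scale_sum_right)

lemma comb_delta: "j < n \<Longrightarrow> comb (\<lambda>i. if i = j then r else 0) = r *s (\<phi>^^j) c"
proof -
  assume j: "j < n"
  have "comb (\<lambda>i. if i = j then r else 0) = (\<Sum>i<n. if i = j then r *s (\<phi>^^j) c else 0)"
    unfolding comb_def by (rule sum.cong) auto
  also have "\<dots> = r *s (\<phi>^^j) c" using j by simp
  finally show ?thesis .
qed

definition P where "P = range comb"

lemma subP: "subspace P"
proof (rule subspaceI)
  have "0 = comb (\<lambda>_. 0)" by (simp add: comb_def)
  then show "0 \<in> P" unfolding P_def by blast
  show "x + y \<in> P" if "x \<in> P" "y \<in> P" for x y
    using that unfolding P_def by (auto simp: comb_add)
  show "r *s x \<in> P" if "x \<in> P" for r x
    using that unfolding P_def by (auto simp: comb_scale)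
qed

definition D where "D = (SOME D. subspace D \<and> P \<inter> D = {0} \<and> {x + y | x y. x \<in> P \<and> y \<in> D} = UNIV)"

lemma D_props: "subspace D" "P \<inter> D = {0}" "{x + y | x y. x \<in> P \<and> y \<in> D} = UNIV"
proof -
  have "\<exists>D. subspace D \<and> P \<inter> D = {0} \<and> {x + y | x y. x \<in> P \<and> y \<in> D} = UNIV"
    using semi[unfolded semisimple_module_def, rule_format, OF subP] .
  then have D0: "subspace D \<and> P \<inter> D = {0} \<and> {x + y | x y. x \<in> P \<and> y \<in> D} = UNIV"
    unfolding D_def by (rule someI_ex)
  show "subspace D" "P \<inter> D = {0}" "{x + y | x y. x \<in> P \<and> y \<in> D} = UNIV"
    using D0 by (rule conjunct1, rule conjunct1[OF conjunct2], rule conjunct2[OF conjunct2])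
qed

lemma decomp: "\<exists>a d. d \<in> D \<and> x = comb a + d"
proof -
  have "x \<in> {x + y | x y. x \<in> P \<and> y \<in> D}" using D_props(3) by simp
  then obtain p q where pq: "x = p + q" "p \<in> P" "q \<in> D" by blast
  from pq(2) obtain a where "p = comb a" unfolding P_def by blast
  then show ?thesis using pq by blast
qed

lemma uniq: "comb a + d = comb b + e \<Longrightarrow> d \<in> D \<Longrightarrow> e \<in> D \<Longrightarrow> k < n \<Longrightarrow> a k *s c = b k *s c"
proof -
  assume h: "comb a + d = comb b + e" "d \<in> D" "e \<in> D" "k < n"
  have "comb a - comb b = (comb a + d) - (comb b + d)" by simp
  also have "\<dots> = (comb b + e) - (comb b + d)" using h(1) by simp
  also have "\<dots> = e - d" by simp
  finally have "comb (\<lambda>i. a i - b i) = e - d" using comb_diff[of a b] by simp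
  moreover have "e - d \<in> D" by (rule subspace_diff[OF D_props(1) h(3) h(2)])
  moreover have "comb (\<lambda>i. a i - b i) \<in> P" unfolding P_def by simp
  ultimately have "e - d \<in> P \<inter> D" by simp
  then have "e - d = 0" using D_props(2) by blast
  then have "comb (\<lambda>i. a i - b i) = 0" using \<open>comb (\<lambda>i. a i - b i) = e - d\<close> by simp
  then have "(a k - b k) *s c = 0" using indep h(4) by blast
  then show ?thesis by (simp add: scale_left_diff_distrib)
qed

definition theta where
  "theta x = (SOME y. \<exists>a d. d \<in> D \<and> x = comb a + d \<and> y = a (n-1) *s c)"

lemma theta_char: "d \<in> D \<Longrightarrow> theta (comb a + d) = a (n-1) *s c"
proof -
  assume d: "d \<in> D"
  have "\<exists>y. \<exists>b e. e \<in> D \<and> comb a + d = comb b + e \<and> y = b (n-1) *s c" using d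
    by (intro exI[of _ "a (n-1) *s c"] exI[of _ a] exI[of _ d]) simp
  then have "\<exists>b e. e \<in> D \<and> comb a + d = comb b + e \<and> theta (comb a + d) = b (n-1) *s c"
    unfolding theta_def by (rule someI_ex)
  then obtain b e where be: "e \<in> D" "comb a + d = comb b + e" "theta (comb a + d) = b (n-1) *s c"
    by blast
  have "a (n-1) *s c = b (n-1) *s c" using uniq[OF be(2) d be(1)] npos by simp
  then show ?thesis using be(3) by simp
qed

lemma theta_hom: "module_hom scale scale theta"
  unfolding module_hom_iff
proof (intro conjI allI)
  show "module scale" by (rule module_axioms)
  then show "module scale" .
  fix x y
  obtain a d where ad: "d \<in> D" "x = comb a + d" using decomp by blast
  obtain b e where be: "e \<in> D" "y = comb b + e" using decomp by blast
  have "x + y = comb (\<lambda>i. a i + b i) + (d + e)" using ad be comb_add[of a b]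
    by (simp add: algebra_simps)
  moreover have "d + e \<in> D" using D_props(1) ad(1) be(1) by (rule subspace_add)
  ultimately have "theta (x + y) = (a (n-1) + b (n-1)) *s c" using theta_char by simp
  then show "theta (x + y) = theta x + theta y"
    using theta_char ad be by (simp add: scale_left_distrib)
next
  fix r x
  obtain a d where ad: "d \<in> D" "x = comb a + d" using decomp by blast
  have "r *s x = comb (\<lambda>i. r * a i) + r *s d" using ad comb_scale[of r a]
    by (simp add: scale_right_distrib)
  moreover have "r *s d \<in> D" using D_props(1) ad(1) by (rule subspace_scale)
  ultimately show "theta (r *s x) = r *s theta x"
    using theta_char ad by simp
qed

lemma theta_zero[simp]: "theta 0 = 0"
  using module_hom.zero[OF theta_hom] .


lemma theta_pow: "j < n \<Longrightarrow> theta ((\<phi>^^j) c) = (if j = n-1 then c else 0)"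
proof -
  assume j: "j < n"
  have "theta ((\<phi>^^j) c) = theta (comb (\<lambda>i. if i = j then 1 else 0) + 0)"
    using comb_delta[OF j, of 1] by simp
  also have "\<dots> = (if n - 1 = j then 1 else 0) *s c"
    using theta_char[of 0] subspace_0[OF D_props(1)] by simp
  finally show ?thesis by auto
qed

definition pi where "pi x = (\<Sum>i<n. (\<phi>^^i) (theta ((\<phi>^^(n-1-i)) x)))"

lemma lastz: "\<phi> ((\<phi>^^(n-1)) y) = 0"
proof -
  obtain k where k: "n = Suc k" using npos by (cases n) auto
  then have "\<phi> ((\<phi>^^(n-1)) y) = (\<phi>^^n) y" by simp
  then show ?thesis using nil by simp
qed

lemma pi_hom: "module_hom scale scale pi"
proof -
  have mp: "module_pair scale scale" by (simp add: module_pair_def module_axioms)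
  have "module_hom scale scale (\<lambda>x. \<Sum>i\<in>{..<n}. ((\<phi>^^i) \<circ> theta \<circ> (\<phi>^^(n-1-i))) x)"
  proof (rule module_pair.module_hom_sum[OF mp, where f="\<lambda>i. (\<phi>^^i) \<circ> theta \<circ> (\<phi>^^(n-1-i))"])
    fix i
    show "module_hom scale scale ((\<phi>^^i) \<circ> theta \<circ> (\<phi>^^(n-1-i)))"
      by (rule module_hom_compose[OF powhom module_hom_compose[OF theta_hom powhom]])
  next
    show "module scale \<and> module scale" using module_axioms by simp
  qed
  then show ?thesis unfolding pi_def[abs_def] by (simp add: o_def)
qed

lemma pi_comm: "pi (\<phi> x) = \<phi> (pi x)"
proof -
  have nk: "{..<n} = {..<Suc (n-1)}" using npos by simp
  have "pi (\<phi> x) = (\<Sum>i<n. (\<phi>^^i) (theta ((\<phi>^^(n-i)) x)))"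
    unfolding pi_def
  proof (rule sum.cong[OF refl])
    fix i assume "i \<in> {..<n}"
    then have "Suc (n-1-i) = n-i" by simp
    moreover have "(\<phi>^^(n-1-i)) (\<phi> x) = (\<phi>^^(Suc (n-1-i))) x"
      by (simp only: funpow_Suc_right o_apply)
    ultimately show "(\<phi>^^i) (theta ((\<phi>^^(n-1-i)) (\<phi> x))) = (\<phi>^^i) (theta ((\<phi>^^(n-i)) x))"
      by simp
  qed
  also have "\<dots> = (\<Sum>i<n-1. (\<phi>^^(Suc i)) (theta ((\<phi>^^(n - Suc i)) x)))"
    unfolding nk sum.lessThan_Suc_shift by (simp add: big del: funpow.simps)
  also have "\<dots> = (\<Sum>i<n. \<phi> ((\<phi>^^i) (theta ((\<phi>^^(n - 1 - i)) x))))"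
    unfolding nk sum.lessThan_Suc using npos lastz by (simp add: big)
  also have "\<dots> = \<phi> (pi x)"
    unfolding pi_def by (simp add: module_hom.sum[OF hom])
  finally show ?thesis .
qed


lemma pi_basis: "k < n \<Longrightarrow> pi ((\<phi>^^k) c) = (\<phi>^^k) c"
proof -
  assume k: "k < n"
  have "pi ((\<phi>^^k) c) = (\<Sum>i<n. if i = k then (\<phi>^^k) c else 0)"
    unfolding pi_def
  proof (rule sum.cong[OF refl])
    fix i assume i: "i \<in> {..<n}"
    have e: "(\<phi>^^(n-1-i)) ((\<phi>^^k) c) = (\<phi>^^(n-1-i+k)) c" by (rule pp)
    show "(\<phi>^^i) (theta ((\<phi>^^(n-1-i)) ((\<phi>^^k) c))) = (if i = k then (\<phi>^^k) c else 0)"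
    proof (cases "n-1-i+k \<ge> n")
      case True
      then have "i \<noteq> k" using i by auto
      then show ?thesis using True e big by simp
    next
      case False
      then have j: "n-1-i+k < n" by simp
      have iff: "(n-1-i+k = n-1) = (i = k)" using i k by auto
      show ?thesis using e theta_pow[OF j] iff by auto
    qed
  qed
  also have "\<dots> = (\<phi>^^k) c" using k by simp
  finally show ?thesis .
qed

lemma pi_comb: "pi (comb a) = comb a"
proof -
  have "pi (comb a) = (\<Sum>i<n. a i *s pi ((\<phi>^^i) c))"
    unfolding comb_def by (simp add: module_hom.sum[OF pi_hom] module_hom.scale[OF pi_hom])
  also have "\<dots> = comb a" unfolding comb_def
    by (rule sum.cong[OF refl]) (simp add: pi_basis)
  finally show ?thesis .
qed

lemma theta_range: "\<exists>r. theta y = r *s c"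
proof -
  obtain a d where "d \<in> D" "y = comb a + d" using decomp by blast
  then show ?thesis using theta_char by blast
qed

lemma pi_P: "pi x \<in> P"
  unfolding pi_def
proof (rule subspace_sum[OF subP])
  fix i assume i: "i \<in> {..<n}"
  obtain r where r: "theta ((\<phi>^^(n-1-i)) x) = r *s c" using theta_range by blast
  have "(\<phi>^^i) (r *s c) = comb (\<lambda>j. if j = i then r else 0)"
    using comb_delta[of i r] i by (simp add: pow_scale)
  then show "(\<phi>^^i) (theta ((\<phi>^^(n-1-i)) x)) \<in> P" unfolding P_def using r by simp
qed

lemma pi_id: "pi = id"
proof (rule indec[OF pi_hom])
  show "pi \<circ> pi = pi"
  proof
    fix x
    obtain a where "pi x = comb a" using pi_P[of x] unfolding P_def by blast
    then show "(pi \<circ> pi) x = pi x" using pi_comb by simp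
  qed
  show "pi \<circ> \<phi> = \<phi> \<circ> pi" by (rule ext) (simp add: pi_comm)
  have "c \<noteq> 0" using cw by auto
  moreover have "pi c = c" using pi_basis[of 0] npos by simp
  ultimately show "pi \<noteq> (\<lambda>_. 0)" by (metis)
qed

lemma P_UNIV: "\<exists>a. x = comb a"
proof -
  have "x = pi x" using pi_id by simp
  moreover obtain a where "pi x = comb a" using pi_P[of x] unfolding P_def by blast
  ultimately show ?thesis by metis
qed


lemma comm_pow: "\<psi> \<circ> \<phi> = \<phi> \<circ> \<psi> \<Longrightarrow> \<psi> ((\<phi>^^i) x) = (\<phi>^^i) (\<psi> x)"
proof (induction i)
  case 0 then show ?case by simp
next
  case (Suc i)
  have "\<psi> (\<phi> y) = \<phi> (\<psi> y)" for y using Suc.prems by (metis comp_apply)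
  then show ?case using Suc by simp
qed

lemma main:
  assumes \<psi>: "module_hom scale scale \<psi>"
  shows "\<psi> \<circ> \<phi> = \<phi> \<circ> \<psi> \<longleftrightarrow> (\<exists>a :: nat \<Rightarrow> 'a. \<forall>u. (\<Sum>i<n. a i *s (\<phi> ^^ i) u) = \<psi> u)"
proof
  assume cm: "\<psi> \<circ> \<phi> = \<phi> \<circ> \<psi>"
  obtain b where b0: "\<psi> c = comb b" using P_UNIV by blast
  have b: "\<psi> c = (\<Sum>j<n. b j *s (\<phi>^^j) c)" using b0 comb_def by simp
  show "\<exists>a :: nat \<Rightarrow> 'a. \<forall>u. (\<Sum>i<n. a i *s (\<phi> ^^ i) u) = \<psi> u"
  proof (intro exI allI)
    fix u
    obtain a where a0: "u = comb a" using P_UNIV by blast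
    have a: "u = (\<Sum>i<n. a i *s (\<phi>^^i) c)" using a0 comb_def by simp
    have L: "\<psi> u = (\<Sum>i<n. \<Sum>j<n. (a i * b j) *s (\<phi>^^(i+j)) c)"
      by (simp add: a module_hom.sum[OF \<psi>] module_hom.scale[OF \<psi>] comm_pow[OF cm] b
          pow_sum pow_scale pp scale_sum_right)
    have R: "(\<Sum>j<n. b j *s (\<phi>^^j) u) = (\<Sum>j<n. \<Sum>i<n. (b j * a i) *s (\<phi>^^(j+i)) c)"
      by (simp add: a pow_sum pow_scale pp scale_sum_right)
    show "(\<Sum>j<n. b j *s (\<phi>^^j) u) = \<psi> u"
      unfolding L R by (subst sum.swap) (simp add: mult.commute add.commute)
  qed
next
  assume "\<exists>a :: nat \<Rightarrow> 'a. \<forall>u. (\<Sum>i<n. a i *s (\<phi> ^^ i) u) = \<psi> u"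
  then obtain a :: "nat \<Rightarrow> 'a" where a: "\<And>u. \<psi> u = (\<Sum>i<n. a i *s (\<phi> ^^ i) u)" by metis
  show "\<psi> \<circ> \<phi> = \<phi> \<circ> \<psi>"
  proof
    fix u
    show "(\<psi> \<circ> \<phi>) u = (\<phi> \<circ> \<psi>) u"
      by (simp add: a module_hom.sum[OF hom] module_hom.scale[OF hom] funpow_swap1)
  qed
qed

end

theorem corollary4p9:
  fixes scale :: "'a::comm_ring_1 \<Rightarrow> 'b::ab_group_add \<Rightarrow> 'b"
    and \<phi> \<psi> :: "'b \<Rightarrow> 'b" and n :: nat
  assumes "module scale"
    and "fin_gen_module scale"
    and "semisimple_module scale"
    and "module_hom scale scale \<phi>"
    and "indecomposable_nilpotent scale \<phi>"
    and "\<phi> ^^ n = (\<lambda>_. 0)" and "\<phi> ^^ (n - 1) \<noteq> (\<lambda>_. 0)"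
    and "module_hom scale scale \<psi>"
  shows "\<psi> \<circ> \<phi> = \<phi> \<circ> \<psi> \<longleftrightarrow>
         (\<exists>a :: nat \<Rightarrow> 'a. \<forall>u. (\<Sum>i<n. scale (a i) ((\<phi> ^^ i) u)) = \<psi> u)"
proof -
  have ind: "\<And>e. module_hom scale scale e \<Longrightarrow> e \<circ> e = e \<Longrightarrow> e \<circ> \<phi> = \<phi> \<circ> e
       \<Longrightarrow> e \<noteq> (\<lambda>_. 0) \<Longrightarrow> e = id"
    using assms(5) unfolding indecomposable_nilpotent_def decomposable_nilpotent_def by blast
  have "nilp scale \<phi> n" unfolding nilp_def nilp_axioms_def
    using assms(1,3,4,6,7) ind by blast
  then interpret nilp scale \<phi> n .
  obtain c where c: "(\<phi>^^(n-1)) c \<noteq> 0" "\<And>b. scale b ((\<phi>^^(n-1)) c) = 0 \<Longrightarrow> scale b c = 0"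
    using ex_c by blast
  have "nilp_c scale \<phi> n c" unfolding nilp_c_def nilp_c_axioms_def
    using \<open>nilp scale \<phi> n\<close> c by blast
  then interpret nilp_c scale \<phi> n c .
  show ?thesis using main[OF assms(8)] .
qed

end
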